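(* Let $k$ be a commutative ring, $A$ a commutative $k$-algebra, $(A,\mathfrak g_{A/k},\alpha)$ a Lie algebroid, and $S^\cdot=\bigoplus_{i\ge0}S^i$ a noetherian graded $\mathfrak g_{A/k}$-algebra which is semi-simple as a $\mathfrak g_{A/k}$-module and such that $\bar S^0=(S^0)^{\mathfrak g_{A/k}}$ is noetherian. Let $N$ be an $(S^0,\mathfrak g_{A/k})$-module which is of finite type over $S^0$ and semi-simple over $\mathfrak g_{A/k}$. Then the invariant module $\bar N=\{n\in N:\delta n=0\ \forall \delta\in\mathfrak g_{A/k}\}$ is of finite type over $\bar S^0$.
   Context: A Lie algebroid $(A,\mathfrak g_{A/k},\alpha)$: an $A$-module of finite type $\mathfrak g_{A/k}$ with a $k$-bilinear Lie bracket and a map $\alpha:\mathfrak g_{A/k}\to T_{A/k}$ (the $k$-derivations of $A$) which is a homomorphism of Lie algebras and $A$-modules, with $[\delta,a\eta]=\alpha(\delta)(a)\eta+a[\delta,\eta]$. A $\mathfrak g_{A/k}$-module is an $A$-module $M$ with a $k$-Lie algebra homomorphism $f:\mathfrak g_{A/k}\to\mathrm{End}_k(M)$ satisfying $f(a\delta)(m)=af(\delta)(m)$ and $f(\delta)(am)=\alpha(\delta)(a)m+af(\delta)(m)$; it is semi-simple if it is a direct sum of simple $\mathfrak g_{A/k}$-modules. A graded $\mathfrak g_{A/k}$-algebra is a graded commutative $A$-algebra $S^\cdot=\bigoplus_{i\ge0}S^i$ which is a $\mathfrak g_{A/k}$-module via an $A$-linear Lie algebra homomorphism $\phi:\mathfrak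 g_{A/k}\to T_{S^\cdot/k}$ preserving each $S^i$. An $(S^0,\mathfrak g_{A/k})$-module is an $S^0$-module $N$ which is also a $\mathfrak g_{A/k}$-module with $\delta(sn)=\delta(s)n+s\,\delta n$ for $s\in S^0$, $n\in N$. *)

theory Defs
  imports Main
begin

text \<open>The base ring is 'k,
the k-algebra A is 'a with structure map iota, the Lie algebroid g is a type 'g
(an A-module via gsc), the graded algebra S is a type 's with A-algebra map sigma
and homogeneous pieces Sgr i, and N is a type 'n with an action nsc of S (only
used for scalars from S^0).\<close>

definition ring_map :: "('r::comm_ring_1 \<Rightarrow> 't::comm_ring_1) \<Rightarrow> bool" where
  "ring_map f \<longleftrightarrow> f 1 = 1 \<and> (\<forall>x y. f (x + y) = f x + f y) \<and> (\<forall>x y. f (x * y) = f x * f y)"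

definition kder :: "('k::comm_ring_1 \<Rightarrow> 'b::comm_ring_1) \<Rightarrow> ('b \<Rightarrow> 'b) \<Rightarrow> bool" where
  "kder iota D \<longleftrightarrow> (\<forall>x y. D (x + y) = D x + D y) \<and> (\<forall>x y. D (x * y) = x * D y + y * D x)
     \<and> (\<forall>c x. D (iota c * x) = iota c * D x)"

definition module_on :: "'r::comm_ring_1 set \<Rightarrow> ('r \<Rightarrow> 'm::ab_group_add \<Rightarrow> 'm) \<Rightarrow> bool" where
  "module_on R sc \<longleftrightarrow> (\<forall>r\<in>R. \<forall>s\<in>R. \<forall>x. sc (r * s) x = sc r (sc s x))
     \<and> (\<forall>x. sc 1 x = x)
     \<and> (\<forall>r\<in>R. \<forall>s\<in>R. \<forall>x. sc (r + s) x = sc r x + sc s x)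
     \<and> (\<forall>r\<in>R. \<forall>x y. sc r (x + y) = sc r x + sc r y)"

definition fin_type_over :: "'r set \<Rightarrow> ('r \<Rightarrow> 'm::ab_group_add \<Rightarrow> 'm) \<Rightarrow> 'm set \<Rightarrow> bool" where
  "fin_type_over R sc V \<longleftrightarrow> (\<exists>F. finite F \<and> F \<subseteq> V \<and>
      V = {(\<Sum>f\<in>F. sc (r f) f) | r. \<forall>f\<in>F. r f \<in> R})"

definition dsum_decomp :: "('i \<Rightarrow> 'm::ab_group_add set) \<Rightarrow> 'i set \<Rightarrow> 'm set \<Rightarrow> bool" where
  "dsum_decomp M I V \<longleftrightarrow> (\<forall>i\<in>I. M i \<subseteq> V)
     \<and> (\<forall>v\<in>V. \<exists>F x. finite F \<and> F \<subseteq> I \<and> (\<forall>i\<in>F. x i \<in> M i) \<and> v = (\<Sum>i\<in>F. x i))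
     \<and> (\<forall>F x. finite F \<and> F \<subseteq> I \<and> (\<forall>i\<in>F. x i \<in> M i) \<and> (\<Sum>i\<in>F. x i) = 0
            \<longrightarrow> (\<forall>i\<in>F. x i = 0))"

definition ideal_of :: "'r::comm_ring_1 set \<Rightarrow> 'r set \<Rightarrow> bool" where
  "ideal_of R I \<longleftrightarrow> I \<subseteq> R \<and> 0 \<in> I \<and> (\<forall>x\<in>I. \<forall>y\<in>I. x + y \<in> I) \<and> (\<forall>r\<in>R. \<forall>x\<in>I. r * x \<in> I)"

definition noetherian_ring :: "'r::comm_ring_1 set \<Rightarrow> bool" where
  "noetherian_ring R \<longleftrightarrow> (\<forall>I. ideal_of R I \<longrightarrow> fin_type_over R (*) I)"

definition lie_algebroid ::
  "('k::comm_ring_1 \<Rightarrow> 'a::comm_ring_1) \<Rightarrow> ('a \<Rightarrow> 'g::ab_group_add \<Rightarrow> 'g) \<Rightarrow> ('g \<Rightarrow> 'g \<Rightarrow> 'g)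
    \<Rightarrow> ('g \<Rightarrow> 'a \<Rightarrow> 'a) \<Rightarrow> bool" where
  "lie_algebroid iota gsc br alpha \<longleftrightarrow>
     ring_map iota \<and> module_on UNIV gsc \<and> fin_type_over UNIV gsc UNIV
     \<and> (\<forall>x y z. br (x + y) z = br x z + br y z)
     \<and> (\<forall>x y z. br x (y + z) = br x y + br x z)
     \<and> (\<forall>c x y. br (gsc (iota c) x) y = gsc (iota c) (br x y))
     \<and> (\<forall>c x y. br x (gsc (iota c) y) = gsc (iota c) (br x y))
     \<and> (\<forall>x. br x x = 0)
     \<and> (\<forall>x y z. br x (br y z) + br y (br z x) + br z (br x y) = 0)
     \<and> (\<forall>x. kder iota (alpha x))
     \<and> (\<forall>x y b. alpha (x + y) b = alpha x b + alpha y b)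
     \<and> (\<forall>a x b. alpha (gsc a x) b = a * alpha x b)
     \<and> (\<forall>x y b. alpha (br x y) b = alpha x (alpha y b) - alpha y (alpha x b))
     \<and> (\<forall>d a e. br d (gsc a e) = gsc (alpha d a) e + gsc a (br d e))"

definition g_module ::
  "('k::comm_ring_1 \<Rightarrow> 'a::comm_ring_1) \<Rightarrow> ('a \<Rightarrow> 'g::ab_group_add \<Rightarrow> 'g) \<Rightarrow> ('g \<Rightarrow> 'g \<Rightarrow> 'g)
    \<Rightarrow> ('g \<Rightarrow> 'a \<Rightarrow> 'a) \<Rightarrow> ('a \<Rightarrow> 'm::ab_group_add \<Rightarrow> 'm) \<Rightarrow> ('g \<Rightarrow> 'm \<Rightarrow> 'm) \<Rightarrow> bool" where
  "g_module iota gsc br alpha sm f \<longleftrightarrow>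
     module_on UNIV sm
     \<and> (\<forall>d m m'. f d (m + m') = f d m + f d m')
     \<and> (\<forall>c d m. f d (sm (iota c) m) = sm (iota c) (f d m))
     \<and> (\<forall>x y m. f (x + y) m = f x m + f y m)
     \<and> (\<forall>x y m. f (br x y) m = f x (f y m) - f y (f x m))
     \<and> (\<forall>a d m. f (gsc a d) m = sm a (f d m))
     \<and> (\<forall>d a m. f d (sm a m) = sm (alpha d a) m + sm a (f d m))"

definition g_submodule ::
  "('a::comm_ring_1 \<Rightarrow> 'm::ab_group_add \<Rightarrow> 'm) \<Rightarrow> ('g \<Rightarrow> 'm \<Rightarrow> 'm) \<Rightarrow> 'm set \<Rightarrow> bool" where
  "g_submodule sm f U \<longleftrightarrow> 0 \<in> U \<and> (\<forall>x\<in>U. \<forall>y\<in>U. x + y \<in> U) \<and> (\<forall>x\<in>U. - x \<in> U)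
     \<and> (\<forall>a. \<forall>x\<in>U. sm a x \<in> U) \<and> (\<forall>d. \<forall>x\<in>U. f d x \<in> U)"

definition simple_g_submodule ::
  "('a::comm_ring_1 \<Rightarrow> 'm::ab_group_add \<Rightarrow> 'm) \<Rightarrow> ('g \<Rightarrow> 'm \<Rightarrow> 'm) \<Rightarrow> 'm set \<Rightarrow> bool" where
  "simple_g_submodule sm f U \<longleftrightarrow> g_submodule sm f U \<and> U \<noteq> {0}
     \<and> (\<forall>W. g_submodule sm f W \<and> W \<subseteq> U \<longrightarrow> W = {0} \<or> W = U)"

definition g_semisimple ::
  "('a::comm_ring_1 \<Rightarrow> 'm::ab_group_add \<Rightarrow> 'm) \<Rightarrow> ('g \<Rightarrow> 'm \<Rightarrow> 'm) \<Rightarrow> bool" where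
  "g_semisimple sm f \<longleftrightarrow> (\<exists>\<M>. (\<forall>U\<in>\<M>. simple_g_submodule sm f U) \<and> dsum_decomp (\<lambda>U. U) \<M> UNIV)"

definition graded_algebra ::
  "('a::comm_ring_1 \<Rightarrow> 's::comm_ring_1) \<Rightarrow> (nat \<Rightarrow> 's set) \<Rightarrow> bool" where
  "graded_algebra sigma Sgr \<longleftrightarrow> ring_map sigma \<and> (\<forall>a. sigma a \<in> Sgr 0)
     \<and> (\<forall>i. 0 \<in> Sgr i \<and> (\<forall>x\<in>Sgr i. \<forall>y\<in>Sgr i. x + y \<in> Sgr i) \<and> (\<forall>x\<in>Sgr i. - x \<in> Sgr i)
            \<and> (\<forall>a. \<forall>x\<in>Sgr i. sigma a * x \<in> Sgr i))
     \<and> (\<forall>i j. \<forall>x\<in>Sgr i. \<forall>y\<in>Sgr j. x * y \<in> Sgr (i + j))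
     \<and> dsum_decomp Sgr UNIV UNIV"

definition graded_g_algebra ::
  "('k::comm_ring_1 \<Rightarrow> 'a::comm_ring_1) \<Rightarrow> ('a \<Rightarrow> 'g::ab_group_add \<Rightarrow> 'g) \<Rightarrow> ('g \<Rightarrow> 'g \<Rightarrow> 'g)
    \<Rightarrow> ('g \<Rightarrow> 'a \<Rightarrow> 'a) \<Rightarrow> ('a \<Rightarrow> 's::comm_ring_1) \<Rightarrow> (nat \<Rightarrow> 's set) \<Rightarrow> ('g \<Rightarrow> 's \<Rightarrow> 's) \<Rightarrow> bool" where
  "graded_g_algebra iota gsc br alpha sigma Sgr phi \<longleftrightarrow>
     graded_algebra sigma Sgr
     \<and> (\<forall>d. kder (sigma \<circ> iota) (phi d))
     \<and> g_module iota gsc br alpha (\<lambda>a s. sigma a * s) phi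
     \<and> (\<forall>d i. \<forall>s\<in>Sgr i. phi d s \<in> Sgr i)"

definition S0_g_module ::
  "('k::comm_ring_1 \<Rightarrow> 'a::comm_ring_1) \<Rightarrow> ('a \<Rightarrow> 'g::ab_group_add \<Rightarrow> 'g) \<Rightarrow> ('g \<Rightarrow> 'g \<Rightarrow> 'g)
    \<Rightarrow> ('g \<Rightarrow> 'a \<Rightarrow> 'a) \<Rightarrow> ('a \<Rightarrow> 's::comm_ring_1) \<Rightarrow> (nat \<Rightarrow> 's set) \<Rightarrow> ('g \<Rightarrow> 's \<Rightarrow> 's)
    \<Rightarrow> ('s \<Rightarrow> 'n::ab_group_add \<Rightarrow> 'n) \<Rightarrow> ('g \<Rightarrow> 'n \<Rightarrow> 'n) \<Rightarrow> bool" where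
  "S0_g_module iota gsc br alpha sigma Sgr phi nsc psi \<longleftrightarrow>
     module_on (Sgr 0) nsc
     \<and> g_module iota gsc br alpha (\<lambda>a n. nsc (sigma a) n) psi
     \<and> (\<forall>d. \<forall>s\<in>Sgr 0. \<forall>n. psi d (nsc s n) = nsc (phi d s) n + nsc s (psi d n))"

definition invariants :: "('g \<Rightarrow> 'm \<Rightarrow> 'm::zero) \<Rightarrow> 'm set \<Rightarrow> 'm set" where
  "invariants f V = {v\<in>V. \<forall>d. f d v = 0}"

end

theory Submission
  imports Defs "HOL-Library.Function_Algebras"
begin


inductive_set spn :: "('r \<Rightarrow> 'm::ab_group_add \<Rightarrow> 'm) \<Rightarrow> 'm set \<Rightarrow> 'm set" for sc X where
  spn_zero: "0 \<in> spn sc X"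
| spn_base: "x \<in> X \<Longrightarrow> x \<in> spn sc X"
| spn_add: "a \<in> spn sc X \<Longrightarrow> b \<in> spn sc X \<Longrightarrow> a + b \<in> spn sc X"
| spn_smul: "a \<in> spn sc X \<Longrightarrow> sc r a \<in> spn sc X"

lemma spn_sub: "X \<subseteq> spn sc Y \<Longrightarrow> spn sc X \<subseteq> spn sc Y"
proof
  fix x assume "X \<subseteq> spn sc Y" "x \<in> spn sc X"
  then show "x \<in> spn sc Y"
    by (induction rule: spn.induct[OF \<open>x \<in> spn sc X\<close>]) (simp_all add: spn.spn_zero spn.spn_add spn.spn_smul subset_iff)
qed

lemma spn_mono: "X \<subseteq> Y \<Longrightarrow> spn sc X \<subseteq> spn sc Y"
  by (meson order.trans spn.spn_base spn_sub subsetI)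

lemma spn_sum: "finite F \<Longrightarrow> (\<And>f. f \<in> F \<Longrightarrow> g f \<in> spn sc X) \<Longrightarrow> sum g F \<in> spn sc X"
  by (induction F rule: finite_induct) (simp_all add: spn.spn_zero spn.spn_add)

lemma spn_finite_support: "x \<in> spn sc X \<Longrightarrow> \<exists>F. F \<subseteq> X \<and> finite F \<and> x \<in> spn sc F"
proof (induction rule: spn.induct)
  case spn_zero then show ?case by (intro exI[of _ "{}"]) (simp add: spn.spn_zero)
next
  case (spn_base x) then show ?case by (intro exI[of _ "{x}"]) (simp add: spn.spn_base)
next
  case (spn_add a b)
  then obtain F1 F2 where "F1 \<subseteq> X" "finite F1" "a \<in> spn sc F1" "F2 \<subseteq> X" "finite F2" "b \<in> spn sc F2" by blast
  then show ?case using spn_mono[of F1 "F1 \<union> F2" sc] spn_mono[of F2 "F1 \<union> F2" sc]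
    by (intro exI[of _ "F1 \<union> F2"]) (simp add: spn.spn_add subset_iff)
next
  case (spn_smul a r) then show ?case by (meson spn.spn_smul)
qed

context
  fixes sc :: "'r::comm_ring_1 \<Rightarrow> 'm::ab_group_add \<Rightarrow> 'm"
  assumes md: "module_on UNIV sc"
begin

lemma sc_mult: "sc (r * s) x = sc r (sc s x)" using md unfolding module_on_def by blast
lemma sc_one: "sc 1 x = x" using md unfolding module_on_def by blast
lemma sc_ladd: "sc (r + s) x = sc r x + sc s x" using md unfolding module_on_def by blast
lemma sc_radd: "sc r (x + y) = sc r x + sc r y" using md unfolding module_on_def by blast
lemma sc_zero_l: "sc 0 x = 0" using sc_ladd[of 0 0 x] by simp
lemma sc_zero_r: "sc r 0 = 0" using sc_radd[of r 0 0] by simp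
lemma sc_neg_l: "sc (- r) x = - sc r x"
proof -
  have "sc r x + sc (-r) x = 0" using sc_ladd[of r "-r" x] sc_zero_l[of x] by simp
  then show ?thesis by (metis neg_eq_iff_add_eq_0)
qed
lemma sc_neg_r: "sc r (- x) = - sc r x"
proof -
  have "sc r x + sc r (-x) = 0" using sc_radd[of r x "-x"] sc_zero_r[of r] by simp
  then show ?thesis by (metis neg_eq_iff_add_eq_0)
qed
lemma sc_diff_r: "sc r (x - y) = sc r x - sc r y"
  by (metis diff_conv_add_uminus sc_radd sc_neg_r)
lemma sc_sum_r: "finite F \<Longrightarrow> sc r (sum g F) = (\<Sum>i\<in>F. sc r (g i))"
  by (induction F rule: finite_induct) (auto simp: sc_zero_r sc_radd)
lemma sc_sum_l: "finite F \<Longrightarrow> sc (sum g F) x = (\<Sum>i\<in>F. sc (g i) x)"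
  by (induction F rule: finite_induct) (auto simp: sc_zero_l sc_ladd)

lemma spn_diff: "a \<in> spn sc X \<Longrightarrow> b \<in> spn sc X \<Longrightarrow> a - b \<in> spn sc X"
proof -
  assume "a \<in> spn sc X" "b \<in> spn sc X"
  then have "a + sc (-1) b \<in> spn sc X" by (simp add: spn.spn_add spn.spn_smul)
  then show ?thesis by (simp add: sc_neg_l sc_one)
qed

lemma spn_insert: "x \<in> spn sc (insert f F) \<Longrightarrow> \<exists>r y. y \<in> spn sc F \<and> x = sc r f + y"
proof (induction rule: spn.induct)
  case spn_zero then show ?case by (intro exI[of _ 0]) (simp add: sc_zero_l spn.spn_zero)
next
  case (spn_base x)
  then show ?case
  proof
    assume "x = f" then show ?thesis by (intro exI[of _ 1] exI[of _ 0]) (simp add: sc_one spn.spn_zero)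
  next
    assume "x \<in> F" then show ?thesis by (intro exI[of _ 0] exI[of _ x]) (simp add: sc_zero_l spn.spn_base)
  qed
next
  case (spn_add a b)
  then obtain r y r' y' where "y \<in> spn sc F" "a = sc r f + y" "y' \<in> spn sc F" "b = sc r' f + y'" by blast
  then show ?case by (intro exI[of _ "r + r'"] exI[of _ "y + y'"]) (simp add: sc_ladd algebra_simps spn.spn_add)
next
  case (spn_smul a s)
  then obtain r y where "y \<in> spn sc F" "a = sc r f + y" by blast
  then show ?case by (intro exI[of _ "s * r"] exI[of _ "sc s y"]) (simp add: sc_radd sc_mult spn.spn_smul)
qed

lemma spn_finite_char: "finite F \<Longrightarrow> spn sc F = {(\<Sum>f\<in>F. sc (r f) f) | r. True}"
proof
  assume fin: "finite F"
  show "spn sc F \<subseteq> {(\<Sum>f\<in>F. sc (r f) f) | r. True}"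
  proof
    fix x assume "x \<in> spn sc F"
    then show "x \<in> {(\<Sum>f\<in>F. sc (r f) f) | r. True}"
    proof (induction rule: spn.induct)
      case spn_zero then show ?case by (intro CollectI exI[of _ "\<lambda>_. 0"]) (simp add: sc_zero_l)
    next
      case (spn_base x)
      have "(\<Sum>f\<in>F. sc (if f = x then 1 else 0) f) = (\<Sum>f\<in>F. if f = x then x else 0)"
        by (rule sum.cong) (auto simp: sc_one sc_zero_l)
      also have "\<dots> = x" using fin spn_base by simp
      finally show ?case by (intro CollectI exI[of _ "\<lambda>f. if f = x then 1 else 0"]) simp
    next
      case (spn_add a b)
      then obtain r r' where "a = (\<Sum>f\<in>F. sc (r f) f)" "b = (\<Sum>f\<in>F. sc (r' f) f)" by blast
      then show ?case by (intro CollectI exI[of _ "\<lambda>f. r f + r' f"]) (simp add: sc_ladd sum.distrib)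
    next
      case (spn_smul a s)
      then obtain r where "a = (\<Sum>f\<in>F. sc (r f) f)" by blast
      then show ?case by (intro CollectI exI[of _ "\<lambda>f. s * r f"]) (simp add: sc_sum_r fin sc_mult)
    qed
  qed
  show "{(\<Sum>f\<in>F. sc (r f) f) | r. True} \<subseteq> spn sc F"
  proof safe
    fix r show "(\<Sum>f\<in>F. sc (r f) f) \<in> spn sc F"
      using fin by (intro spn_sum spn.spn_smul spn.spn_base)
  qed
qed

end

lemma module_mult: "module_on UNIV ((*) :: 'r::comm_ring_1 \<Rightarrow> 'r \<Rightarrow> 'r)"
  unfolding module_on_def by (simp add: distrib_right distrib_left mult.assoc)

lemma noeth_ideal:
  assumes "noetherian_ring (UNIV :: 'r::comm_ring_1 set)" "ideal_of (UNIV :: 'r set) I"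
  shows "\<exists>G. finite G \<and> G \<subseteq> I \<and> (\<forall>x\<in>I. \<exists>a. x = (\<Sum>g\<in>G. a g * g))"
proof -
  have "fin_type_over UNIV (*) I" using assms unfolding noetherian_ring_def by blast
  then obtain G where G: "finite G" "G \<subseteq> I" "I = {(\<Sum>f\<in>G. r f * f) | r. \<forall>f\<in>G. r f \<in> UNIV}"
    unfolding fin_type_over_def by (elim exE conjE) simp
  show ?thesis
    by (rule exI[of _ G]) (use G in auto)
qed


lemma spn_empty: assumes md: "module_on UNIV sc" shows "spn sc {} = {0}"
proof
  show "spn sc {} \<subseteq> {0}"
  proof
    fix x assume "x \<in> spn sc {}" then show "x \<in> {0}"
      by (induction rule: spn.induct) (simp_all add: sc_zero_r[OF md])
  qed
qed (simp add: spn.spn_zero)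

lemma noeth_module:
  fixes sc :: "'r::comm_ring_1 \<Rightarrow> 'm::ab_group_add \<Rightarrow> 'm"
  assumes noeth: "noetherian_ring (UNIV::'r set)" and md: "module_on UNIV sc" and fin: "finite F"
  shows "X \<subseteq> spn sc F \<Longrightarrow> \<exists>X0. X0 \<subseteq> X \<and> finite X0 \<and> X \<subseteq> spn sc X0"
using fin proof (induction F arbitrary: X rule: finite_induct)
  case empty
  then have "X \<subseteq> {0}" using spn_empty[OF md] by metis
  then have "finite X" using finite_subset by blast
  then show ?case by (intro exI[of _ X]) (auto intro: spn.spn_base)
next
  case (insert f F)
  note radd = sc_radd[OF md] and ladd = sc_ladd[OF md] and mult = sc_mult[OF md]
    and z_l = sc_zero_l[OF md] and z_r = sc_zero_r[OF md]
  define Y where "Y = spn sc X"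
  define I where "I = {r. \<exists>y\<in>spn sc F. sc r f + y \<in> Y}"
  have ideal: "ideal_of (UNIV::'r set) I"
    unfolding ideal_of_def
  proof (intro conjI ballI)
    show "0 \<in> I" unfolding I_def Y_def using z_l spn.spn_zero by fastforce
    fix x y assume "x \<in> I" "y \<in> I"
    then obtain u v where uv: "u \<in> spn sc F" "sc x f + u \<in> Y" "v \<in> spn sc F" "sc y f + v \<in> Y"
      unfolding I_def by blast
    have "sc (x + y) f + (u + v) = (sc x f + u) + (sc y f + v)" by (simp add: ladd algebra_simps)
    then show "x + y \<in> I" unfolding I_def Y_def using uv unfolding Y_def
      by (metis (mono_tags, lifting) mem_Collect_eq spn.spn_add)
  next
    fix r x assume "x \<in> I"
    then obtain u where u: "u \<in> spn sc F" "sc x f + u \<in> Y" unfolding I_def by blast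
    have "sc (r * x) f + sc r u = sc r (sc x f + u)" by (simp add: mult radd)
    then show "r * x \<in> I" unfolding I_def Y_def using u unfolding Y_def
      by (metis (mono_tags, lifting) mem_Collect_eq spn.spn_smul)
  qed simp
  obtain G where G: "finite G" "G \<subseteq> I" "\<forall>x\<in>I. \<exists>a. x = (\<Sum>g\<in>G. a g * g)"
    using noeth_ideal[OF noeth ideal] by blast
  have "\<forall>g\<in>G. \<exists>y. y \<in> spn sc F \<and> sc g f + y \<in> Y" using G(2) unfolding I_def by blast
  then obtain yg where yg: "\<And>g. g \<in> G \<Longrightarrow> yg g \<in> spn sc F \<and> sc g f + yg g \<in> Y" by metis
  have "\<forall>g\<in>G. \<exists>E. E \<subseteq> X \<and> finite E \<and> sc g f + yg g \<in> spn sc E"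
    using yg spn_finite_support unfolding Y_def by metis
  then obtain Eg where Eg: "\<And>g. g \<in> G \<Longrightarrow> Eg g \<subseteq> X \<and> finite (Eg g) \<and> sc g f + yg g \<in> spn sc (Eg g)"
    by metis
  define Z where "Z = Y \<inter> spn sc F"
  obtain Z0 where Z0: "Z0 \<subseteq> Z" "finite Z0" "Z \<subseteq> spn sc Z0"
    using insert.IH[of Z] unfolding Z_def by blast
  have "\<forall>z\<in>Z0. \<exists>E. E \<subseteq> X \<and> finite E \<and> z \<in> spn sc E"
    using Z0(1) spn_finite_support unfolding Z_def Y_def by blast
  then obtain Ez where Ez: "\<And>z. z \<in> Z0 \<Longrightarrow> Ez z \<subseteq> X \<and> finite (Ez z) \<and> z \<in> spn sc (Ez z)"
    by metis
  define X0 where "X0 = (\<Union>g\<in>G. Eg g) \<union> (\<Union>z\<in>Z0. Ez z)"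
  have X0sub: "X0 \<subseteq> X" unfolding X0_def using Eg Ez by blast
  have X0fin: "finite X0" unfolding X0_def using Eg Ez G(1) Z0(2) by blast
  have Egsp: "sc g f + yg g \<in> spn sc X0" if "g \<in> G" for g
    using Eg[OF that] spn_mono[of "Eg g" X0 sc] that unfolding X0_def by blast
  have "Z0 \<subseteq> spn sc X0"
  proof
    fix z assume "z \<in> Z0" then show "z \<in> spn sc X0"
      using Ez[of z] spn_mono[of "Ez z" X0 sc] unfolding X0_def by blast
  qed
  then have Zsp: "Z \<subseteq> spn sc X0" using Z0(3) spn_sub by blast
  have "X \<subseteq> spn sc X0"
  proof
    fix x assume xX: "x \<in> X"
    then obtain r y where ry: "y \<in> spn sc F" "x = sc r f + y"
      using insert.prems spn_insert[OF md] by blast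
    have xY: "x \<in> Y" unfolding Y_def using xX by (rule spn.spn_base)
    then have "r \<in> I" unfolding I_def using ry by auto
    then obtain a where a: "r = (\<Sum>g\<in>G. a g * g)" using G(3) by blast
    define s where "s = (\<Sum>g\<in>G. sc (a g) (sc g f + yg g))"
    have s1: "s \<in> spn sc X0" unfolding s_def using G(1) Egsp by (intro spn_sum spn.spn_smul) auto
    have s2: "s \<in> Y" unfolding s_def using G(1) yg unfolding Y_def by (intro spn_sum spn.spn_smul) auto
    have "s = (\<Sum>g\<in>G. sc (a g * g) f) + (\<Sum>g\<in>G. sc (a g) (yg g))"
      unfolding s_def by (simp add: radd mult sum.distrib)
    also have "\<dots> = sc r f + (\<Sum>g\<in>G. sc (a g) (yg g))"
      using sc_sum_l[OF md G(1)] a by simp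
    finally have s3: "s = sc r f + (\<Sum>g\<in>G. sc (a g) (yg g))" .
    have "x - s = y - (\<Sum>g\<in>G. sc (a g) (yg g))" using s3 ry(2) by simp
    moreover have "y - (\<Sum>g\<in>G. sc (a g) (yg g)) \<in> spn sc F"
      using G(1) yg ry(1) by (intro spn_diff[OF md] spn_sum spn.spn_smul) auto
    ultimately have "x - s \<in> Z" unfolding Z_def using spn_diff[OF md, of x X s] xY s2 unfolding Y_def by simp
    then have "x - s \<in> spn sc X0" using Zsp by blast
    then have "(x - s) + s \<in> spn sc X0" using s1 by (rule spn.spn_add)
    then show "x \<in> spn sc X0" by simp
  qed
  then show ?case using X0sub X0fin by blast
qed


definition hdec :: "(nat \<Rightarrow> 's::comm_ring_1 set) \<Rightarrow> 's \<Rightarrow> (nat \<Rightarrow> 's) \<Rightarrow> bool" where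
  "hdec Sgr x h \<longleftrightarrow> (\<forall>i. h i \<in> Sgr i) \<and> finite {i. h i \<noteq> 0} \<and> x = sum h {i. h i \<noteq> 0}"

definition pi0 :: "(nat \<Rightarrow> 's::comm_ring_1 set) \<Rightarrow> 's \<Rightarrow> 's" where
  "pi0 Sgr x = (SOME h. hdec Sgr x h) 0"

context
  fixes sigma :: "'a::comm_ring_1 \<Rightarrow> 's::comm_ring_1" and Sgr :: "nat \<Rightarrow> 's set"
  assumes GA: "graded_algebra sigma Sgr"
begin

lemma G_zero: "0 \<in> Sgr i" using GA unfolding graded_algebra_def by blast
lemma G_add: "x \<in> Sgr i \<Longrightarrow> y \<in> Sgr i \<Longrightarrow> x + y \<in> Sgr i" using GA unfolding graded_algebra_def by blast
lemma G_neg: "x \<in> Sgr i \<Longrightarrow> - x \<in> Sgr i" using GA unfolding graded_algebra_def by blast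
lemma G_diff: "x \<in> Sgr i \<Longrightarrow> y \<in> Sgr i \<Longrightarrow> x - y \<in> Sgr i" using G_add G_neg by (metis diff_conv_add_uminus)
lemma G_mult: "x \<in> Sgr i \<Longrightarrow> y \<in> Sgr j \<Longrightarrow> x * y \<in> Sgr (i + j)" using GA unfolding graded_algebra_def by blast
lemma G_sigma: "sigma a \<in> Sgr 0" using GA unfolding graded_algebra_def by blast
lemma G_ringmap: "ring_map sigma" using GA unfolding graded_algebra_def by blast
lemma G_one: "1 \<in> Sgr 0" using G_sigma[of 1] G_ringmap unfolding ring_map_def by simp
lemma G_dsum: "dsum_decomp Sgr UNIV UNIV" using GA unfolding graded_algebra_def by blast
lemma G_uniq: "finite F \<Longrightarrow> (\<forall>i\<in>F. x i \<in> Sgr i) \<Longrightarrow> sum x F = 0 \<Longrightarrow> i \<in> F \<Longrightarrow> x i = 0"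
proof -
  assume a: "finite F" "\<forall>i\<in>F. x i \<in> Sgr i" "sum x F = 0" "i \<in> F"
  have "\<forall>F x. finite F \<and> F \<subseteq> UNIV \<and> (\<forall>i\<in>F. x i \<in> Sgr i) \<and> (\<Sum>i\<in>F. x i) = 0 \<longrightarrow> (\<forall>i\<in>F. x i = 0)"
    using G_dsum unfolding dsum_decomp_def by (elim conjE)
  then show "x i = 0" using a by simp
qed
lemma G_sum: "finite P \<Longrightarrow> (\<And>p. p \<in> P \<Longrightarrow> y p \<in> Sgr i) \<Longrightarrow> sum y P \<in> Sgr i"
  by (induction P rule: finite_induct) (simp_all add: G_zero G_add)

lemma hdec_intro:
  assumes "finite S" "\<And>i. h i \<in> Sgr i" "\<And>i. i \<notin> S \<Longrightarrow> h i = 0" "x = sum h S"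
  shows "hdec Sgr x h"
proof -
  have sub: "{i. h i \<noteq> 0} \<subseteq> S" using assms(3) by blast
  then have fin: "finite {i. h i \<noteq> 0}" using assms(1) finite_subset by blast
  have "sum h S = sum h {i. h i \<noteq> 0}"
    by (rule sum.mono_neutral_right[OF assms(1) sub]) auto
  then show ?thesis unfolding hdec_def using assms(2,4) fin by simp
qed

lemma hdec_unique:
  assumes "hdec Sgr x h" "hdec Sgr x k" shows "h = k"
proof -
  define S where "S = {i. h i \<noteq> 0} \<union> {i. k i \<noteq> 0}"
  have fin: "finite S" using assms unfolding hdec_def S_def by blast
  have "sum h S = sum h {i. h i \<noteq> 0}"
    by (rule sum.mono_neutral_right[OF fin]) (auto simp: S_def)
  moreover have "sum k S = sum k {i. k i \<noteq> 0}"
    by (rule sum.mono_neutral_right[OF fin]) (auto simp: S_def)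
  ultimately have "sum h S = sum k S" using assms unfolding hdec_def by simp
  then have z: "(\<Sum>i\<in>S. h i - k i) = 0" by (simp add: sum_subtractf)
  have mem: "\<forall>i\<in>S. h i - k i \<in> Sgr i" using assms unfolding hdec_def by (simp add: G_diff)
  have d: "h i - k i = 0" if "i \<in> S" for i
    using G_uniq[OF fin mem z that] .
  show "h = k"
  proof
    fix i show "h i = k i"
    proof (cases "i \<in> S")
      case True then show ?thesis using d[of i] by simp
    next
      case False then show ?thesis unfolding S_def by simp
    qed
  qed
qed

lemma hdec_exists: "\<exists>h. hdec Sgr x h"
proof -
  have "\<forall>v\<in>UNIV. \<exists>F x. finite F \<and> F \<subseteq> UNIV \<and> (\<forall>i\<in>F. x i \<in> Sgr i) \<and> v = (\<Sum>i\<in>F. x i)"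
    using G_dsum unfolding dsum_decomp_def by (elim conjE)
  then obtain F xf where F: "finite F" "\<forall>i\<in>F. xf i \<in> Sgr i" "x = sum xf F"
    by (meson UNIV_I)
  define h where "h i = (if i \<in> F then xf i else 0)" for i
  have e: "x = sum h F" unfolding h_def F(3) by (rule sum.cong) auto
  have "hdec Sgr x h"
    by (rule hdec_intro[OF F(1) _ _ e]) (auto simp: h_def F G_zero)
  then show ?thesis by blast
qed

lemma pi0_rep:
  assumes "finite S" "\<And>i. h i \<in> Sgr i" "\<And>i. i \<notin> S \<Longrightarrow> h i = 0" "x = sum h S"
  shows "pi0 Sgr x = h 0"
proof -
  have "hdec Sgr x h" using hdec_intro[OF assms] .
  moreover have "hdec Sgr x (SOME h. hdec Sgr x h)" using hdec_exists by (rule someI_ex)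
  ultimately show ?thesis unfolding pi0_def using hdec_unique by metis
qed

lemma rep_exists: "\<exists>S h. finite S \<and> 0 \<in> S \<and> (\<forall>i. h i \<in> Sgr i) \<and> (\<forall>i. i \<notin> S \<longrightarrow> h i = 0) \<and> x = sum h S"
proof -
  obtain h where h: "hdec Sgr x h" using hdec_exists by blast
  define S where "S = insert 0 {i. h i \<noteq> 0}"
  have fin: "finite S" using h unfolding hdec_def S_def by simp
  have "sum h S = sum h {i. h i \<noteq> 0}"
    by (rule sum.mono_neutral_right[OF fin]) (auto simp: S_def)
  moreover have "0 \<in> S" "\<forall>i. i \<notin> S \<longrightarrow> h i = 0" unfolding S_def by auto
  ultimately show ?thesis using h fin unfolding hdec_def
    by (intro exI[of _ S] exI[of _ h]) auto
qed

lemma pi0_general: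
  assumes "finite P" "\<And>p. p \<in> P \<Longrightarrow> y p \<in> Sgr (deg p)" "x = sum y P"
  shows "pi0 Sgr x = sum y {p\<in>P. deg p = 0}"
proof -
  define h where "h i = sum y {p\<in>P. deg p = i}" for i
  have "x = sum h (deg ` P)" unfolding h_def assms(3) using assms(1) by (rule sum.image_gen)
  moreover have "h i \<in> Sgr i" for i unfolding h_def using assms(1,2) by (intro G_sum) auto
  moreover have "h i = 0" if "i \<notin> deg ` P" for i unfolding h_def using that by (intro sum.neutral) auto
  ultimately have "pi0 Sgr x = h 0" using assms(1) by (intro pi0_rep[of "deg ` P"]) auto
  then show ?thesis unfolding h_def .
qed

lemma pi0_in: "pi0 Sgr x \<in> Sgr 0"
proof -
  obtain S h where "finite S" "\<forall>i. h i \<in> Sgr i" "\<forall>i. i \<notin> S \<longrightarrow> h i = 0" "x = sum h S"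
    using rep_exists[of x] by blast
  then show ?thesis using pi0_rep[of S h x] by auto
qed

lemma pi0_id: "x \<in> Sgr 0 \<Longrightarrow> pi0 Sgr x = x"
  using pi0_rep[of "{0}" "\<lambda>i. if i = 0 then x else 0" x] by (auto simp: G_zero)

lemma pi0_add: "pi0 Sgr (x + y) = pi0 Sgr x + pi0 Sgr y"
proof -
  obtain S h where h: "finite S" "\<forall>i. h i \<in> Sgr i" "\<forall>i. i \<notin> S \<longrightarrow> h i = 0" "x = sum h S"
    using rep_exists[of x] by blast
  obtain T k where k: "finite T" "\<forall>i. k i \<in> Sgr i" "\<forall>i. i \<notin> T \<longrightarrow> k i = 0" "y = sum k T"
    using rep_exists[of y] by blast
  have "sum h S = sum h (S \<union> T)" using h k(1) by (intro sum.mono_neutral_left) auto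
  moreover have "sum k T = sum k (S \<union> T)" using k h(1) by (intro sum.mono_neutral_left) auto
  ultimately have "x + y = (\<Sum>i\<in>S \<union> T. h i + k i)" using h k by (simp add: sum.distrib)
  then have "pi0 Sgr (x + y) = h 0 + k 0"
    using h k by (intro pi0_rep[of "S \<union> T" "\<lambda>i. h i + k i"]) (auto simp: G_add)
  moreover have "pi0 Sgr x = h 0" using h by (intro pi0_rep[of S]) auto
  moreover have "pi0 Sgr y = k 0" using k by (intro pi0_rep[of T]) auto
  ultimately show ?thesis by simp
qed

lemma pi0_zero: "pi0 Sgr 0 = 0" using pi0_id G_zero by blast

lemma pi0_sum: "finite F \<Longrightarrow> pi0 Sgr (sum g F) = (\<Sum>i\<in>F. pi0 Sgr (g i))"
  by (induction F rule: finite_induct) (simp_all add: pi0_zero pi0_add)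

lemma pi0_mult: "pi0 Sgr (x * y) = pi0 Sgr x * pi0 Sgr y"
proof -
  obtain S h where h: "finite S" "0 \<in> S" "\<forall>i. h i \<in> Sgr i" "\<forall>i. i \<notin> S \<longrightarrow> h i = 0" "x = sum h S"
    using rep_exists[of x] by blast
  obtain T k where k: "finite T" "0 \<in> T" "\<forall>i. k i \<in> Sgr i" "\<forall>i. i \<notin> T \<longrightarrow> k i = 0" "y = sum k T"
    using rep_exists[of y] by blast
  have xy: "x * y = (\<Sum>p\<in>S \<times> T. h (fst p) * k (snd p))"
  proof -
    have "x * y = (\<Sum>i\<in>S. \<Sum>j\<in>T. h i * k j)" using h(5) k(5) by (simp only: sum_product)
    also have "\<dots> = (\<Sum>(i,j)\<in>S \<times> T. h i * k j)" by (rule sum.cartesian_product)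
    also have "\<dots> = (\<Sum>p\<in>S \<times> T. h (fst p) * k (snd p))" by (simp add: case_prod_beta)
    finally show ?thesis .
  qed
  have "pi0 Sgr (x * y) = (\<Sum>p\<in>{p\<in>S \<times> T. fst p + snd p = 0}. h (fst p) * k (snd p))"
  proof (rule pi0_general[where deg = "\<lambda>p. fst p + snd p"])
    show "finite (S \<times> T)" using h(1) k(1) by simp
    show "x * y = (\<Sum>p\<in>S \<times> T. h (fst p) * k (snd p))" by (rule xy)
    fix p show "h (fst p) * k (snd p) \<in> Sgr (fst p + snd p)" using h(3) k(3) by (simp add: G_mult)
  qed
  also have "{p\<in>S \<times> T. fst p + snd p = 0} = {(0,0)}" using h(2) k(2) by auto
  finally have "pi0 Sgr (x * y) = h 0 * k 0" by simp
  moreover have "pi0 Sgr x = h 0" using h by (intro pi0_rep[of S]) auto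
  moreover have "pi0 Sgr y = k 0" using k by (intro pi0_rep[of T]) auto
  ultimately show ?thesis by simp
qed

lemma pi0_one: "pi0 Sgr 1 = 1" using pi0_id G_one by blast

lemma pi0_phi:
  assumes add: "\<And>m m'. D (m + m') = D m + D m'" and pres: "\<And>i s. s \<in> Sgr i \<Longrightarrow> D s \<in> Sgr i"
  shows "pi0 Sgr (D x) = D (pi0 Sgr x)"
proof -
  have D0: "D 0 = 0" using add[of 0 0] by simp
  have Ds: "finite F \<Longrightarrow> D (sum g F) = (\<Sum>i\<in>F. D (g i))" for F and g :: "nat \<Rightarrow> 's"
    by (induction F rule: finite_induct) (simp_all add: D0 add)
  obtain S h where h: "finite S" "\<forall>i. h i \<in> Sgr i" "\<forall>i. i \<notin> S \<longrightarrow> h i = 0" "x = sum h S"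
    using rep_exists[of x] by blast
  have "pi0 Sgr (D x) = D (h 0)"
    using h by (intro pi0_rep[of S "\<lambda>i. D (h i)"]) (auto simp: Ds D0 pres)
  moreover have "pi0 Sgr x = h 0" using h by (intro pi0_rep[of S]) auto
  ultimately show ?thesis by simp
qed

end


definition sumI :: "'i set \<Rightarrow> ('i \<Rightarrow> 'm::ab_group_add set) \<Rightarrow> 'm set" where
  "sumI I U = {(\<Sum>i\<in>I. x i) | x. \<forall>i\<in>I. x i \<in> U i}"

context
  fixes smM :: "'a::comm_ring_1 \<Rightarrow> 'm::ab_group_add \<Rightarrow> 'm" and fM :: "'g \<Rightarrow> 'm \<Rightarrow> 'm"
    and smW :: "'a \<Rightarrow> 'w::ab_group_add \<Rightarrow> 'w" and fW :: "'g \<Rightarrow> 'w \<Rightarrow> 'w"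
    and ph :: "'m \<Rightarrow> 'w"
  assumes ph_add: "\<And>x y. ph (x + y) = ph x + ph y"
    and ph_sm: "\<And>a x. ph (smM a x) = smW a (ph x)"
    and ph_f: "\<And>d x. ph (fM d x) = fW d (ph x)"
    and smM_add: "\<And>a x y. smM a (x + y) = smM a x + smM a y"
    and fM_add: "\<And>d x y. fM d (x + y) = fM d x + fM d y"
begin

lemma ph_zero: "ph 0 = 0" using ph_add[of 0 0] by simp
lemma ph_neg: "ph (- x) = - ph x"
  using ph_add[of x "-x"] ph_zero by (metis add.right_inverse neg_eq_iff_add_eq_0)
lemma smM_zero: "smM a 0 = 0" using smM_add[of a 0 0] by simp
lemma fM_zero: "fM d 0 = 0" using fM_add[of d 0 0] by simp
lemma smM_neg: "smM a (- x) = - smM a x"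
  using smM_add[of a x "-x"] smM_zero by (metis add.right_inverse neg_eq_iff_add_eq_0)
lemma fM_neg: "fM d (- x) = - fM d x"
  using fM_add[of d x "-x"] fM_zero by (metis add.right_inverse neg_eq_iff_add_eq_0)

lemma sub_zero: "g_submodule smM fM {0}"
  unfolding g_submodule_def by (simp add: smM_zero fM_zero)

lemma sub_plus:
  assumes "g_submodule smM fM V" "g_submodule smM fM U"
  shows "g_submodule smM fM {v + u | v u. v \<in> V \<and> u \<in> U}"
proof -
  have V: "0 \<in> V" "\<And>x y. x \<in> V \<Longrightarrow> y \<in> V \<Longrightarrow> x + y \<in> V" "\<And>x. x \<in> V \<Longrightarrow> - x \<in> V"
    "\<And>a x. x \<in> V \<Longrightarrow> smM a x \<in> V" "\<And>d x. x \<in> V \<Longrightarrow> fM d x \<in> V"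
    using assms(1) unfolding g_submodule_def by blast+
  have U: "0 \<in> U" "\<And>x y. x \<in> U \<Longrightarrow> y \<in> U \<Longrightarrow> x + y \<in> U" "\<And>x. x \<in> U \<Longrightarrow> - x \<in> U"
    "\<And>a x. x \<in> U \<Longrightarrow> smM a x \<in> U" "\<And>d x. x \<in> U \<Longrightarrow> fM d x \<in> U"
    using assms(2) unfolding g_submodule_def by blast+
  show ?thesis unfolding g_submodule_def
  proof (intro conjI ballI allI)
    show "0 \<in> {v + u | v u. v \<in> V \<and> u \<in> U}" using V(1) U(1) by force
  next
    fix x y assume "x \<in> {v + u | v u. v \<in> V \<and> u \<in> U}" "y \<in> {v + u | v u. v \<in> V \<and> u \<in> U}"
    then obtain v u v' u' where "x = v + u" "y = v' + u'" "v \<in> V" "u \<in> U" "v' \<in> V" "u' \<in> U" by blast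
    then show "x + y \<in> {v + u | v u. v \<in> V \<and> u \<in> U}"
      by (intro CollectI exI[of _ "v + v'"] exI[of _ "u + u'"]) (simp add: V U algebra_simps)
  next
    fix x assume "x \<in> {v + u | v u. v \<in> V \<and> u \<in> U}"
    then obtain v u where "x = v + u" "v \<in> V" "u \<in> U" by blast
    then show "- x \<in> {v + u | v u. v \<in> V \<and> u \<in> U}"
      by (intro CollectI exI[of _ "- v"] exI[of _ "- u"]) (simp add: V U algebra_simps)
  next
    fix a x assume "x \<in> {v + u | v u. v \<in> V \<and> u \<in> U}"
    then obtain v u where "x = v + u" "v \<in> V" "u \<in> U" by blast
    then show "smM a x \<in> {v + u | v u. v \<in> V \<and> u \<in> U}"
      by (intro CollectI exI[of _ "smM a v"] exI[of _ "smM a u"]) (simp add: V U smM_add)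
  next
    fix d x assume "x \<in> {v + u | v u. v \<in> V \<and> u \<in> U}"
    then obtain v u where "x = v + u" "v \<in> V" "u \<in> U" by blast
    then show "fM d x \<in> {v + u | v u. v \<in> V \<and> u \<in> U}"
      by (intro CollectI exI[of _ "fM d v"] exI[of _ "fM d u"]) (simp add: V U fM_add)
  qed
qed

lemma lift_core:
  assumes "finite I" "\<forall>i\<in>I. simple_g_submodule smM fM (U i)"
  shows "\<exists>V. g_submodule smM fM V \<and> (\<forall>x\<in>V. ph x = 0 \<longrightarrow> x = 0) \<and> ph ` sumI I U \<subseteq> ph ` V"
  using assms
proof (induction I rule: finite_induct)
  case empty
  have "sumI {} U = {0}" unfolding sumI_def by simp
  then show ?case using sub_zero by (intro exI[of _ "{0}"]) auto
next
  case (insert i I)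
  then obtain V where V: "g_submodule smM fM V" "\<forall>x\<in>V. ph x = 0 \<longrightarrow> x = 0" "ph ` sumI I U \<subseteq> ph ` V"
    by auto
  have simp: "simple_g_submodule smM fM (U i)" using insert.prems by simp
  then have Usub: "g_submodule smM fM (U i)" unfolding simple_g_submodule_def by blast
  have Vc: "0 \<in> V" "\<And>x y. x \<in> V \<Longrightarrow> y \<in> V \<Longrightarrow> x + y \<in> V" "\<And>x. x \<in> V \<Longrightarrow> - x \<in> V"
    "\<And>a x. x \<in> V \<Longrightarrow> smM a x \<in> V" "\<And>d x. x \<in> V \<Longrightarrow> fM d x \<in> V"
    using V(1) unfolding g_submodule_def by blast+
  have Uc: "0 \<in> U i" "\<And>x y. x \<in> U i \<Longrightarrow> y \<in> U i \<Longrightarrow> x + y \<in> U i" "\<And>x. x \<in> U i \<Longrightarrow> - x \<in> U i"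
    "\<And>a x. x \<in> U i \<Longrightarrow> smM a x \<in> U i" "\<And>d x. x \<in> U i \<Longrightarrow> fM d x \<in> U i"
    using Usub unfolding g_submodule_def by blast+
  have decomp: "\<exists>u s. u \<in> U i \<and> s \<in> sumI I U \<and> z = u + s" if "z \<in> sumI (insert i I) U" for z
  proof -
    from that obtain x where x: "\<forall>j\<in>insert i I. x j \<in> U j" "z = (\<Sum>j\<in>insert i I. x j)"
      unfolding sumI_def by blast
    have "z = x i + (\<Sum>j\<in>I. x j)" using x(2) insert.hyps by simp
    moreover have "(\<Sum>j\<in>I. x j) \<in> sumI I U" unfolding sumI_def using x(1) by blast
    ultimately show ?thesis using x(1) by blast
  qed
  define V' where "V' = {v + u | v u. v \<in> V \<and> u \<in> U i}"
  show ?case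
  proof (cases "\<forall>x\<in>V'. ph x = 0 \<longrightarrow> x = 0")
    case True
    have "ph ` sumI (insert i I) U \<subseteq> ph ` V'"
    proof
      fix w assume "w \<in> ph ` sumI (insert i I) U"
      then obtain z where z: "z \<in> sumI (insert i I) U" "w = ph z" by blast
      then obtain u s where us: "u \<in> U i" "s \<in> sumI I U" "z = u + s" using decomp by blast
      then obtain v where v: "v \<in> V" "ph s = ph v" using V(3) by blast
      have "w = ph (v + u)" using z(2) us(3) v(2) by (simp add: ph_add add.commute)
      moreover have "v + u \<in> V'" unfolding V'_def using v(1) us(1) by blast
      ultimately show "w \<in> ph ` V'" by blast
    qed
    then show ?thesis using True sub_plus[OF V(1) Usub] unfolding V'_def by blast
  next
    case False
    then obtain z where z: "z \<in> V'" "ph z = 0" "z \<noteq> 0" by blast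
    then obtain v u where vu: "z = v + u" "v \<in> V" "u \<in> U i" unfolding V'_def by blast
    have "u \<noteq> 0" using vu z V(2) by auto
    define T where "T = {u \<in> U i. \<exists>v\<in>V. ph u = ph v}"
    have "u \<in> T" unfolding T_def using vu z Vc(3)[of v]
      by (intro CollectI conjI bexI[of _ "- v"]) (auto simp: ph_neg ph_add eq_neg_iff_add_eq_0 add.commute)
    have Tsub: "g_submodule smM fM T" unfolding g_submodule_def
    proof (intro conjI ballI allI)
      show "0 \<in> T" unfolding T_def using Uc(1) Vc(1) by blast
    next
      fix x y assume "x \<in> T" "y \<in> T"
      then obtain v1 v2 where "x \<in> U i" "y \<in> U i" "v1 \<in> V" "v2 \<in> V" "ph x = ph v1" "ph y = ph v2"
        unfolding T_def by blast
      then show "x + y \<in> T" unfolding T_def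
        by (intro CollectI conjI bexI[of _ "v1 + v2"]) (auto simp: ph_add Uc Vc)
    next
      fix x assume "x \<in> T"
      then obtain v1 where "x \<in> U i" "v1 \<in> V" "ph x = ph v1" unfolding T_def by blast
      then show "- x \<in> T" unfolding T_def
        by (intro CollectI conjI bexI[of _ "- v1"]) (auto simp: ph_neg Uc Vc)
    next
      fix a x assume "x \<in> T"
      then obtain v1 where "x \<in> U i" "v1 \<in> V" "ph x = ph v1" unfolding T_def by blast
      then show "smM a x \<in> T" unfolding T_def
        by (intro CollectI conjI bexI[of _ "smM a v1"]) (auto simp: ph_sm Uc Vc)
    next
      fix d x assume "x \<in> T"
      then obtain v1 where "x \<in> U i" "v1 \<in> V" "ph x = ph v1" unfolding T_def by blast
      then show "fM d x \<in> T" unfolding T_def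
        by (intro CollectI conjI bexI[of _ "fM d v1"]) (auto simp: ph_f Uc Vc)
    qed
    have "T \<subseteq> U i" unfolding T_def by blast
    then have "T = {0} \<or> T = U i" using simp Tsub unfolding simple_g_submodule_def by blast
    then have TU: "T = U i" using \<open>u \<in> T\<close> \<open>u \<noteq> 0\<close> by blast
    have "ph ` sumI (insert i I) U \<subseteq> ph ` V"
    proof
      fix w assume "w \<in> ph ` sumI (insert i I) U"
      then obtain z where z: "z \<in> sumI (insert i I) U" "w = ph z" by blast
      then obtain u s where us: "u \<in> U i" "s \<in> sumI I U" "z = u + s" using decomp by blast
      then obtain v where v: "v \<in> V" "ph s = ph v" using V(3) by blast
      from us(1) TU obtain v' where v': "v' \<in> V" "ph u = ph v'" unfolding T_def by blast
      have "w = ph (v' + v)" using z(2) us(3) v(2) v'(2) by (simp add: ph_add)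
      moreover have "v' + v \<in> V" using v v' Vc(2) by blast
      ultimately show "w \<in> ph ` V" by blast
    qed
    then show ?thesis using V(1,2) by blast
  qed
qed

lemma lift:
  assumes "finite I" "\<forall>i\<in>I. simple_g_submodule smM fM (U i)" "c \<in> sumI I U" "\<forall>d. fW d (ph c) = 0"
  shows "\<exists>c'. (\<forall>d. fM d c' = 0) \<and> ph c' = ph c"
proof -
  from lift_core[OF assms(1,2)] obtain V where V: "g_submodule smM fM V" "\<forall>x\<in>V. ph x = 0 \<longrightarrow> x = 0" "ph ` sumI I U \<subseteq> ph ` V"
    by (elim exE conjE)
  have "ph c \<in> ph ` V" using V(3) assms(3) by (meson image_eqI subsetD)
  then obtain c' where c': "c' \<in> V" "ph c' = ph c" by (metis imageE)
  have "fM d c' = 0" for d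
  proof -
    have "fM d c' \<in> V" using V(1) c'(1) unfolding g_submodule_def by simp
    moreover have "ph (fM d c') = 0" using ph_f c'(2) assms(4) by simp
    ultimately show ?thesis using V(2) by simp
  qed
  then show ?thesis using c'(2) by (intro exI[of _ c']) simp
qed

end


definition injv :: "'n \<Rightarrow> 's::ab_group_add \<Rightarrow> ('n \<Rightarrow> 's)" where
  "injv v u = (\<lambda>x. if x = v then u else 0)"

lemma sum_fun_apply: "(\<Sum>i\<in>F. f i) x = (\<Sum>i\<in>F. f i x)"
  by (induction F rule: infinite_finite_induct) auto

lemma injv_simple:
  fixes sm :: "'a::comm_ring_1 \<Rightarrow> 's::ab_group_add \<Rightarrow> 's" and f :: "'g \<Rightarrow> 's \<Rightarrow> 's" and v :: 'n
  assumes U: "simple_g_submodule sm f U" and sm0: "\<And>a. sm a 0 = 0" and f0: "\<And>d. f d 0 = 0"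
  shows "simple_g_submodule (\<lambda>a c. \<lambda>x. sm a (c x)) (\<lambda>d c. \<lambda>x. f d (c x)) (injv v ` U)"
proof -
  let ?smM = "(\<lambda>a c. \<lambda>x. sm a (c x)) :: 'a \<Rightarrow> ('n \<Rightarrow> 's) \<Rightarrow> ('n \<Rightarrow> 's)"
  let ?fM = "(\<lambda>d c. \<lambda>x. f d (c x)) :: 'g \<Rightarrow> ('n \<Rightarrow> 's) \<Rightarrow> ('n \<Rightarrow> 's)"
  have Us: "g_submodule sm f U" "U \<noteq> {0}" "\<And>W. g_submodule sm f W \<Longrightarrow> W \<subseteq> U \<Longrightarrow> W = {0} \<or> W = U"
    using U unfolding simple_g_submodule_def by blast+
  have Uc: "0 \<in> U" "\<And>x y. x \<in> U \<Longrightarrow> y \<in> U \<Longrightarrow> x + y \<in> U" "\<And>x. x \<in> U \<Longrightarrow> - x \<in> U"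
    "\<And>a x. x \<in> U \<Longrightarrow> sm a x \<in> U" "\<And>d x. x \<in> U \<Longrightarrow> f d x \<in> U"
    using Us(1) unfolding g_submodule_def by blast+
  have iv: "injv v u x = (if x = v then u else 0)" for u x unfolding injv_def by simp
  have sub: "g_submodule ?smM ?fM (injv v ` U)" unfolding g_submodule_def
  proof (intro conjI ballI allI)
    have "(0 :: 'n \<Rightarrow> 's) = injv v 0" by (rule ext) (simp add: iv)
    then show "0 \<in> injv v ` U" using Uc(1) by simp
  next
    fix x y assume "x \<in> injv v ` U" "y \<in> injv v ` U"
    then obtain u u' where "x = injv v u" "y = injv v u'" "u \<in> U" "u' \<in> U" by blast
    moreover have "injv v u + injv v u' = injv v (u + u')" by (rule ext) (simp add: iv)
    ultimately show "x + y \<in> injv v ` U" using Uc(2) by simp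
  next
    fix x assume "x \<in> injv v ` U"
    then obtain u where "x = injv v u" "u \<in> U" by blast
    moreover have "- injv v u = injv v (- u)" by (rule ext) (simp add: iv)
    ultimately show "- x \<in> injv v ` U" using Uc(3) by simp
  next
    fix a x assume "x \<in> injv v ` U"
    then obtain u where "x = injv v u" "u \<in> U" by blast
    moreover have "?smM a (injv v u) = injv v (sm a u)" by (rule ext) (simp add: iv sm0)
    ultimately show "?smM a x \<in> injv v ` U" using Uc(4) by simp
  next
    fix d x assume "x \<in> injv v ` U"
    then obtain u where "x = injv v u" "u \<in> U" by blast
    moreover have "?fM d (injv v u) = injv v (f d u)" by (rule ext) (simp add: iv f0)
    ultimately show "?fM d x \<in> injv v ` U" using Uc(5) by simp
  qed
  have ne: "injv v ` U \<noteq> {0}"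
  proof
    assume a: "injv v ` U = {0}"
    obtain u where "u \<in> U" "u \<noteq> 0" using Us(2) Uc(1) by blast
    then have "injv v u = 0" using a by blast
    then have "injv v u v = 0" by simp
    then show False using \<open>u \<noteq> 0\<close> by (simp add: iv)
  qed
  have max: "W = {0} \<or> W = injv v ` U" if W: "g_submodule ?smM ?fM W" "W \<subseteq> injv v ` U" for W
  proof -
    have Wc: "0 \<in> W" "\<And>x y. x \<in> W \<Longrightarrow> y \<in> W \<Longrightarrow> x + y \<in> W" "\<And>x. x \<in> W \<Longrightarrow> - x \<in> W"
      "\<And>a x. x \<in> W \<Longrightarrow> ?smM a x \<in> W" "\<And>d x. x \<in> W \<Longrightarrow> ?fM d x \<in> W"
      using W(1) unfolding g_submodule_def by blast+
    define W' where "W' = (\<lambda>c. c v) ` W"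
    have hback: "c = injv v (c v)" if cW: "c \<in> W" for c
    proof -
      obtain u where "c = injv v u" using W(2) cW by blast
      then show ?thesis by (simp add: iv)
    qed
    have W'sub: "g_submodule sm f W'" unfolding g_submodule_def W'_def
    proof (intro conjI ballI allI)
      show "0 \<in> (\<lambda>c. c v) ` W" using Wc(1) by (intro image_eqI[of _ _ 0]) simp_all
    next
      fix x y assume "x \<in> (\<lambda>c. c v) ` W" "y \<in> (\<lambda>c. c v) ` W"
      then obtain c c' where "x = c v" "y = c' v" "c \<in> W" "c' \<in> W" by blast
      then show "x + y \<in> (\<lambda>c. c v) ` W" using Wc(2)[of c c'] by (intro image_eqI[of _ _ "c + c'"]) simp_all
    next
      fix x assume "x \<in> (\<lambda>c. c v) ` W"
      then obtain c where "x = c v" "c \<in> W" by blast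
      then show "- x \<in> (\<lambda>c. c v) ` W" using Wc(3)[of c] by (intro image_eqI[of _ _ "- c"]) simp_all
    next
      fix a x assume "x \<in> (\<lambda>c. c v) ` W"
      then obtain c where "x = c v" "c \<in> W" by blast
      then show "sm a x \<in> (\<lambda>c. c v) ` W" using Wc(4)[of c a] by (intro image_eqI[of _ _ "(\<lambda>x. sm a (c x))"]) simp_all
    next
      fix d x assume "x \<in> (\<lambda>c. c v) ` W"
      then obtain c where "x = c v" "c \<in> W" by blast
      then show "f d x \<in> (\<lambda>c. c v) ` W" using Wc(5)[of c d] by (intro image_eqI[of _ _ "(\<lambda>x. f d (c x))"]) simp_all
    qed
    have "W' \<subseteq> U"
    proof
      fix x assume "x \<in> W'"
      then obtain c where "x = c v" "c \<in> W" unfolding W'_def by blast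
      then obtain u where "c = injv v u" "u \<in> U" using W(2) by blast
      then show "x \<in> U" using \<open>x = c v\<close> by (simp add: iv)
    qed
    then have "W' = {0} \<or> W' = U" using Us(3) W'sub by blast
    then show ?thesis
    proof
      assume "W' = {0}"
      then have "c = 0" if "c \<in> W" for c
      proof -
        have "c v = 0" using that \<open>W' = {0}\<close> unfolding W'_def by blast
        then show ?thesis using hback[OF that] by (simp add: injv_def zero_fun_def)
      qed
      then have "W = {0}" using Wc(1) by blast
      then show ?thesis by simp
    next
      assume "W' = U"
      have "injv v ` U \<subseteq> W"
      proof
        fix x assume "x \<in> injv v ` U"
        then obtain u where "x = injv v u" "u \<in> U" by blast
        then obtain c where "c \<in> W" "c v = u" using \<open>W' = U\<close> unfolding W'_def by blast
        then show "x \<in> W" using hback[of c] \<open>x = injv v u\<close> by simp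
      qed
      then show ?thesis using W(2) by blast
    qed
  qed
  show ?thesis unfolding simple_g_submodule_def using sub ne max by blast
qed


theorem mainTheorem2:
  fixes iota :: "'k::comm_ring_1 \<Rightarrow> 'a::comm_ring_1"
    and gsc :: "'a \<Rightarrow> 'g::ab_group_add \<Rightarrow> 'g"
    and br :: "'g \<Rightarrow> 'g \<Rightarrow> 'g"
    and alpha :: "'g \<Rightarrow> 'a \<Rightarrow> 'a"
    and sigma :: "'a \<Rightarrow> 's::comm_ring_1"
    and Sgr :: "nat \<Rightarrow> 's set"
    and phi :: "'g \<Rightarrow> 's \<Rightarrow> 's"
    and nsc :: "'s \<Rightarrow> 'n::ab_group_add \<Rightarrow> 'n"
    and psi :: "'g \<Rightarrow> 'n \<Rightarrow> 'n"
  assumes algebroid: "lie_algebroid iota gsc br alpha"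
    and S_alg: "graded_g_algebra iota gsc br alpha sigma Sgr phi"
    and S_noeth: "noetherian_ring (UNIV :: 's set)"
    and S_ss: "g_semisimple (\<lambda>a s. sigma a * s) phi"
    and S0bar_noeth: "noetherian_ring (invariants phi (Sgr 0))"
    and N_mod: "S0_g_module iota gsc br alpha sigma Sgr phi nsc psi"
    and N_fin: "fin_type_over (Sgr 0) nsc UNIV"
    and N_ss: "g_semisimple (\<lambda>a n. nsc (sigma a) n) psi"
  shows "fin_type_over (invariants phi (Sgr 0)) nsc (invariants psi UNIV)"
proof -
  have GA: "graded_algebra sigma Sgr" using S_alg unfolding graded_g_algebra_def by simp
  have gmS: "g_module iota gsc br alpha (\<lambda>a s. sigma a * s) phi" using S_alg unfolding graded_g_algebra_def by simp
  have phi_add: "\<And>d x y. phi d (x + y) = phi d x + phi d y" using gmS unfolding g_module_def by simp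
  have phi_pres: "\<And>d i s. s \<in> Sgr i \<Longrightarrow> phi d s \<in> Sgr i" using S_alg unfolding graded_g_algebra_def by simp
  have phi_zero: "\<And>d. phi d 0 = 0" using phi_add[of _ 0 0] by simp
  have modN: "module_on (Sgr 0) nsc" using N_mod unfolding S0_g_module_def by simp
  have gmN: "g_module iota gsc br alpha (\<lambda>a n. nsc (sigma a) n) psi" using N_mod unfolding S0_g_module_def by simp
  have psi_add: "\<And>d x y. psi d (x + y) = psi d x + psi d y" using gmN unfolding g_module_def by simp
  have psi_zero: "\<And>d. psi d 0 = 0" using psi_add[of _ 0 0] by simp
  have psi_sum: "\<And>d F g. finite F \<Longrightarrow> psi d (sum g F) = (\<Sum>i\<in>F. psi d (g i))"
  proof -
    fix d and F :: "'x set" and g assume "finite F"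
    then show "psi d (sum g F) = (\<Sum>i\<in>F. psi d (g i))"
      by (induction F rule: finite_induct) (simp_all add: psi_zero psi_add)
  qed
  have leib: "\<And>d s n. s \<in> Sgr 0 \<Longrightarrow> psi d (nsc s n) = nsc (phi d s) n + nsc s (psi d n)"
    using N_mod unfolding S0_g_module_def by simp
  have n_mult: "\<And>r s x. r \<in> Sgr 0 \<Longrightarrow> s \<in> Sgr 0 \<Longrightarrow> nsc (r * s) x = nsc r (nsc s x)"
    using modN unfolding module_on_def by simp
  have n_one: "\<And>x. nsc 1 x = x" using modN unfolding module_on_def by simp
  have n_ladd: "\<And>r s x. r \<in> Sgr 0 \<Longrightarrow> s \<in> Sgr 0 \<Longrightarrow> nsc (r + s) x = nsc r x + nsc s x"
    using modN unfolding module_on_def by simp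
  have n_radd: "\<And>r x y. r \<in> Sgr 0 \<Longrightarrow> nsc r (x + y) = nsc r x + nsc r y"
    using modN unfolding module_on_def by simp
  have Z0: "0 \<in> Sgr 0" using G_zero[OF GA] .
  have n_zero_r: "\<And>r. r \<in> Sgr 0 \<Longrightarrow> nsc r 0 = 0" using n_radd[of _ 0 0] by simp
  have n_zero_l: "\<And>x. nsc 0 x = 0" using n_ladd[OF Z0 Z0] by simp
  have n_sum_r: "\<And>r F g. r \<in> Sgr 0 \<Longrightarrow> finite F \<Longrightarrow> nsc r (sum g F) = (\<Sum>i\<in>F. nsc r (g i))"
  proof -
    fix r and F :: "'x set" and g assume r: "r \<in> Sgr 0" and fF: "finite F"
    from fF show "nsc r (sum g F) = (\<Sum>i\<in>F. nsc r (g i))"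
      by (induction F rule: finite_induct) (simp_all add: n_zero_r[OF r] n_radd[OF r])
  qed
  note p_add = pi0_add[OF GA] and p_mult = pi0_mult[OF GA] and p_in = pi0_in[OF GA]
    and p_id = pi0_id[OF GA] and p_one = pi0_one[OF GA] and p_zero = pi0_zero[OF GA]
  define nsc' where "nsc' s n = nsc (pi0 Sgr s) n" for s n
  have md': "module_on UNIV nsc'"
    unfolding module_on_def nsc'_def
    by (simp add: p_add p_mult p_in p_one n_mult n_one n_ladd n_radd)
  obtain F where F: "finite F" "F \<subseteq> UNIV" "UNIV = {(\<Sum>f\<in>F. nsc (r f) f) | r. \<forall>f\<in>F. r f \<in> Sgr 0}"
    using N_fin unfolding fin_type_over_def by (elim exE conjE) simp
  have "(UNIV :: 'n set) \<subseteq> spn nsc' F"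
  proof
    fix n :: 'n
    have "n \<in> {(\<Sum>f\<in>F. nsc (r f) f) | r. \<forall>f\<in>F. r f \<in> Sgr 0}" using F(3) by simp
    then obtain r where r: "\<forall>f\<in>F. r f \<in> Sgr 0" "n = (\<Sum>f\<in>F. nsc (r f) f)" by blast
    have "n = (\<Sum>f\<in>F. nsc' (r f) f)" unfolding nsc'_def r(2) using r(1) p_id by (intro sum.cong) auto
    then show "n \<in> spn nsc' F" using spn_finite_char[OF md' F(1)] by blast
  qed
  then have "invariants psi UNIV \<subseteq> spn nsc' F" by blast
  from noeth_module[OF S_noeth md' F(1) this]
  obtain X0 where X0: "X0 \<subseteq> invariants psi UNIV" "finite X0" "invariants psi UNIV \<subseteq> spn nsc' X0"
    by (elim exE conjE)
  have X0inv: "\<And>v d. v \<in> X0 \<Longrightarrow> psi d v = 0" using X0(1) unfolding invariants_def by blast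
  obtain MM where MM: "\<forall>U\<in>MM. simple_g_submodule (\<lambda>a s. sigma a * s) phi U" "dsum_decomp (\<lambda>U. U) MM UNIV"
    using S_ss unfolding g_semisimple_def by (elim exE conjE) simp
  have decS: "\<forall>s. \<exists>FF xs. finite FF \<and> FF \<subseteq> MM \<and> (\<forall>U\<in>FF. xs U \<in> U) \<and> s = (\<Sum>U\<in>FF. xs U)"
  proof -
    have "\<forall>v\<in>UNIV. \<exists>FF x. finite FF \<and> FF \<subseteq> MM \<and> (\<forall>i\<in>FF. x i \<in> i) \<and> v = (\<Sum>i\<in>FF. x i)"
      using MM(2) unfolding dsum_decomp_def by (elim conjE)
    then show ?thesis by simp
  qed
  define ph :: "('n \<Rightarrow> 's) \<Rightarrow> 'n" where "ph c = (\<Sum>v\<in>X0. nsc (pi0 Sgr (c v)) v)" for c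
  define smM :: "'a \<Rightarrow> ('n \<Rightarrow> 's) \<Rightarrow> ('n \<Rightarrow> 's)" where "smM a c = (\<lambda>x. sigma a * c x)" for a c
  define fM :: "'g \<Rightarrow> ('n \<Rightarrow> 's) \<Rightarrow> ('n \<Rightarrow> 's)" where "fM d c = (\<lambda>x. phi d (c x))" for d c
  have ph_add: "\<And>x y. ph (x + y) = ph x + ph y"
    unfolding ph_def by (simp add: p_add n_ladd p_in sum.distrib)
  have ph_sm: "\<And>a x. ph (smM a x) = nsc (sigma a) (ph x)"
  proof -
    fix a x
    have "ph (smM a x) = (\<Sum>v\<in>X0. nsc (sigma a) (nsc (pi0 Sgr (x v)) v))"
      unfolding ph_def smM_def
      by (intro sum.cong) (simp_all add: p_mult p_id G_sigma[OF GA] n_mult p_in)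
    also have "\<dots> = nsc (sigma a) (ph x)" unfolding ph_def
      by (simp add: n_sum_r[OF G_sigma[OF GA] X0(2)])
    finally show "ph (smM a x) = nsc (sigma a) (ph x)" .
  qed
  have ph_f: "\<And>d x. ph (fM d x) = psi d (ph x)"
  proof -
    fix d x
    have "psi d (ph x) = (\<Sum>v\<in>X0. psi d (nsc (pi0 Sgr (x v)) v))"
      unfolding ph_def by (rule psi_sum[OF X0(2)])
    also have "\<dots> = (\<Sum>v\<in>X0. nsc (pi0 Sgr (phi d (x v))) v)"
    proof (rule sum.cong)
      fix v assume v: "v \<in> X0"
      have "psi d (nsc (pi0 Sgr (x v)) v) = nsc (phi d (pi0 Sgr (x v))) v + nsc (pi0 Sgr (x v)) (psi d v)"
        by (rule leib[OF p_in])
      also have "\<dots> = nsc (phi d (pi0 Sgr (x v))) v" using X0inv[OF v] n_zero_r[OF p_in] by simp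
      also have "phi d (pi0 Sgr (x v)) = pi0 Sgr (phi d (x v))"
        by (rule pi0_phi[OF GA, symmetric]) (simp_all add: phi_add phi_pres)
      finally show "psi d (nsc (pi0 Sgr (x v)) v) = nsc (pi0 Sgr (phi d (x v))) v" .
    qed simp
    finally show "ph (fM d x) = psi d (ph x)" unfolding ph_def fM_def by simp
  qed
  have smM_add: "\<And>a x y. smM a (x + y) = smM a x + smM a y"
    unfolding smM_def by (rule ext) (simp add: distrib_left)
  have fM_add: "\<And>d x y. fM d (x + y) = fM d x + fM d y"
    unfolding fM_def by (rule ext) (simp add: phi_add)
  have lift_inst: "\<And>I U c. finite I \<Longrightarrow> \<forall>i\<in>I. simple_g_submodule smM fM (U i) \<Longrightarrow> c \<in> sumI I U
      \<Longrightarrow> \<forall>d. psi d (ph c) = 0 \<Longrightarrow> \<exists>c'. (\<forall>d. fM d c' = 0) \<and> ph c' = ph c"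
    by (rule lift[OF ph_add ph_sm ph_f smM_add fM_add])
  have smM_eq: "smM = (\<lambda>a c x. sigma a * c x)" unfolding smM_def by simp
  have fM_eq: "fM = (\<lambda>d c x. phi d (c x))" unfolding fM_def by simp
  have simpinj: "simple_g_submodule smM fM (injv v ` U)" if U: "U \<in> MM" for v :: 'n and U
  proof -
    have "simple_g_submodule (\<lambda>a s. sigma a * s) phi U" using MM(1) U by blast
    from injv_simple[OF this, of v] show ?thesis unfolding smM_eq fM_eq by (simp add: phi_zero)
  qed
  show ?thesis unfolding fin_type_over_def
  proof (intro exI[of _ X0] conjI)
    show "finite X0" by (rule X0(2))
    show "X0 \<subseteq> invariants psi UNIV" by (rule X0(1))
    show "invariants psi UNIV = {(\<Sum>f\<in>X0. nsc (r f) f) | r. \<forall>f\<in>X0. r f \<in> invariants phi (Sgr 0)}"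
    proof
      show "invariants psi UNIV \<subseteq> {(\<Sum>f\<in>X0. nsc (r f) f) | r. \<forall>f\<in>X0. r f \<in> invariants phi (Sgr 0)}"
      proof
        fix w assume w: "w \<in> invariants psi UNIV"
        then have winv: "\<And>d. psi d w = 0" unfolding invariants_def by simp
        from w X0(3) have "w \<in> spn nsc' X0" by (rule subsetD[rotated])
        then obtain r where r: "w = (\<Sum>v\<in>X0. nsc' (r v) v)"
          unfolding spn_finite_char[OF md' X0(2)] by auto
        have "\<forall>v. \<exists>p. finite (fst p) \<and> fst p \<subseteq> MM \<and> (\<forall>U\<in>fst p. snd p U \<in> U) \<and> r v = (\<Sum>U\<in>fst p. snd p U)"
        proof
          fix v
          obtain FF xs where H: "finite FF" "FF \<subseteq> MM" "\<forall>U\<in>FF. xs U \<in> U" "r v = (\<Sum>U\<in>FF. xs U)"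
            using decS[rule_format, of "r v"] by auto
          then show "\<exists>p. finite (fst p) \<and> fst p \<subseteq> MM \<and> (\<forall>U\<in>fst p. snd p U \<in> U) \<and> r v = (\<Sum>U\<in>fst p. snd p U)"
            by (intro exI[of _ "(FF, xs)"]) simp
        qed
        then obtain P where P: "\<forall>v. finite (fst (P v)) \<and> fst (P v) \<subseteq> MM \<and> (\<forall>U\<in>fst (P v). snd (P v) U \<in> U)
            \<and> r v = (\<Sum>U\<in>fst (P v). snd (P v) U)"
          using choice[of "\<lambda>v p. finite (fst p) \<and> fst p \<subseteq> MM \<and> (\<forall>U\<in>fst p. snd p U \<in> U) \<and> r v = (\<Sum>U\<in>fst p. snd p U)"]
          by auto
        define FF where "FF v = fst (P v)" for v
        define xs where "xs v = snd (P v)" for v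
        have FF1: "\<And>v. finite (FF v)" and FF2: "\<And>v. FF v \<subseteq> MM" and FF3: "\<And>v U. U \<in> FF v \<Longrightarrow> xs v U \<in> U"
          and FF4: "\<And>v. r v = (\<Sum>U\<in>FF v. xs v U)"
          using P unfolding FF_def xs_def by auto
        define I where "I = Sigma X0 FF"
        define UU where "UU p = injv (fst p) ` (snd p)" for p :: "'n \<times> 's set"
        define xx where "xx p = injv (fst p) (xs (fst p) (snd p))" for p :: "'n \<times> 's set"
        define c where "c = (\<Sum>p\<in>I. xx p)"
        have finI: "finite I" unfolding I_def using X0(2) FF1 by simp
        have cI: "c \<in> sumI I UU" unfolding sumI_def c_def
        proof (intro CollectI exI[of _ xx] conjI refl ballI)
          fix p assume "p \<in> I"
          then show "xx p \<in> UU p" unfolding I_def UU_def xx_def using FF3 by (cases p) auto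
        qed
        have cv: "c v = r v" if v: "v \<in> X0" for v
        proof -
          have "c v = (\<Sum>p\<in>I. xx p v)" unfolding c_def by (rule sum_fun_apply)
          also have "\<dots> = (\<Sum>v'\<in>X0. \<Sum>U\<in>FF v'. xx (v', U) v)"
          proof -
            have "(\<Sum>v'\<in>X0. \<Sum>U\<in>FF v'. xx (v', U) v) = (\<Sum>(v',U)\<in>Sigma X0 FF. xx (v', U) v)"
              by (rule sum.Sigma) (use X0(2) FF1 in auto)
            then show ?thesis unfolding I_def by (simp add: case_prod_beta)
          qed
          also have "\<dots> = (\<Sum>v'\<in>X0. if v' = v then r v else 0)"
          proof (rule sum.cong[OF refl])
            fix v' assume "v' \<in> X0"
            have "(\<Sum>U\<in>FF v'. xx (v', U) v) = (\<Sum>U\<in>FF v'. if v' = v then xs v' U else 0)"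
              unfolding xx_def injv_def by (intro sum.cong) auto
            also have "\<dots> = (if v' = v then r v else 0)" using FF4[of v] by simp
            finally show "(\<Sum>U\<in>FF v'. xx (v', U) v) = (if v' = v then r v else 0)" .
          qed
          also have "\<dots> = r v" using v X0(2) by simp
          finally show ?thesis .
        qed
        have phc: "ph c = w" unfolding ph_def r nsc'_def using cv by (intro sum.cong) auto
        have simpI: "\<forall>p\<in>I. simple_g_submodule smM fM (UU p)"
        proof
          fix p assume "p \<in> I"
          then obtain v U where p: "p = (v, U)" "U \<in> FF v" unfolding I_def by blast
          then have "U \<in> MM" using FF2 by blast
          then show "simple_g_submodule smM fM (UU p)" unfolding UU_def p(1) using simpinj by simp
        qed
        have "\<forall>d. psi d (ph c) = 0" using phc winv by simp
        from lift_inst[OF finI simpI cI this]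
        obtain c' where c': "\<forall>d. fM d c' = 0" "ph c' = ph c" by (elim exE conjE)
        define r' where "r' v = pi0 Sgr (c' v)" for v
        have r'inv: "r' v \<in> invariants phi (Sgr 0)" for v
        proof -
          have "phi d (r' v) = 0" for d
          proof -
            have "phi d (r' v) = pi0 Sgr (phi d (c' v))" unfolding r'_def
              by (rule pi0_phi[OF GA, symmetric]) (simp_all add: phi_add phi_pres)
            also have "phi d (c' v) = 0" using fun_cong[OF c'(1)[rule_format, of d], of v] unfolding fM_def by simp
            finally show ?thesis using p_zero by simp
          qed
          then show ?thesis unfolding invariants_def r'_def using p_in by simp
        qed
        have "w = (\<Sum>v\<in>X0. nsc (r' v) v)" using phc c'(2) unfolding ph_def r'_def by simp
        then show "w \<in> {(\<Sum>f\<in>X0. nsc (r f) f) | r. \<forall>f\<in>X0. r f \<in> invariants phi (Sgr 0)}"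
          using r'inv by blast
      qed
    next
      show "{(\<Sum>f\<in>X0. nsc (r f) f) | r. \<forall>f\<in>X0. r f \<in> invariants phi (Sgr 0)} \<subseteq> invariants psi UNIV"
      proof
        fix w assume "w \<in> {(\<Sum>f\<in>X0. nsc (r f) f) | r. \<forall>f\<in>X0. r f \<in> invariants phi (Sgr 0)}"
        then obtain r where r: "\<forall>f\<in>X0. r f \<in> invariants phi (Sgr 0)" "w = (\<Sum>f\<in>X0. nsc (r f) f)" by blast
        have "psi d w = 0" for d
        proof -
          have "psi d w = (\<Sum>f\<in>X0. psi d (nsc (r f) f))" unfolding r(2) by (rule psi_sum[OF X0(2)])
          also have "\<dots> = (\<Sum>f\<in>X0. 0)"
          proof (rule sum.cong[OF refl])
            fix f assume f: "f \<in> X0"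
            have rf: "r f \<in> Sgr 0" "phi d (r f) = 0" using r(1) f unfolding invariants_def by auto
            show "psi d (nsc (r f) f) = 0"
              using leib[OF rf(1)] rf(2) X0inv[OF f] n_zero_l n_zero_r[OF rf(1)] by simp
          qed
          finally show ?thesis by simp
        qed
        then show "w \<in> invariants psi UNIV" unfolding invariants_def by simp
      qed
    qed
  qed
qed


end
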